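(* Let $\bm A=(A_1,\dots,A_d)$ be Hermitian matrices in $M_n(\mathbb{C})$, $B\in M_n(\mathbb{C})$, and $(\bm\lambda,\nu)\in\mathbb{R}^d\times\mathbb{C}$. Suppose there is a unit vector $\bm\psi\in\mathbb{C}^n$ with $$2\sum_{i=1}^d\|A_i\bm\psi-\lambda_i\bm\psi\|^2+\|B\bm\psi-\nu\bm\psi\|^2+\|B^\dagger\bm\psi-\overline{\nu}\bm\psi\|^2\le\epsilon_1$$ and that $\sum_{i\neq k}\|[A_i,A_k]\|+\|F_{(\bm\lambda,\nu)}(\bm A,B)\|\le\epsilon_2$, for some $\epsilon_1,\epsilon_2\ge0$. Then $(\bm\lambda,\nu)\in\dot\Lambda^{C}_{\epsilon}(\bm A,B)$ with $\epsilon=\sqrt{\tfrac{1}{\sqrt2}\epsilon_1+\epsilon_2}$.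
   Context: Let $n,d,m$ be positive integers. Fix Hermitian matrices $\Gamma_1,\dots,\Gamma_d\in M_{2m}(\mathbb{C})$ with $\Gamma_i^2=I_{2m}$ and $\Gamma_i\Gamma_j=-\Gamma_j\Gamma_i$ for $i\neq j$ (a Clifford representation; the paper uses a specific one built from Pauli matrices). Write $P=\begin{bmatrix} I_m&0\\0&0_m\end{bmatrix}$ and $Q=\begin{bmatrix}0_m&0\\0&I_m\end{bmatrix}$ in $M_{2m}(\mathbb{C})$. For a $d$-tuple $\bm A=(A_1,\dots,A_d)$ of Hermitian matrices in $M_n(\mathbb{C})$, a matrix $B\in M_n(\mathbb{C})$ (not necessarily Hermitian or normal), and a probe site $(\bm\lambda,\nu)\in\mathbb{R}^d\times\mathbb{C}$, the non-Hermitian spectral localizer is $$L_{(\bm\lambda,\nu)}(\bm A,B)=\sum_{i=1}^d (A_i-\lambda_i I)\otimes\Gamma_i+(B-\nu I)\otimes P-(B-\nu I)^\dagger\otimes Q\in M_{2mn}(\mathbb{C}).$$ The Clifford radial gap is $\dot\mu^{C}_{(\bm\lambda,\nu)}(\bm A,B)=\sigma_{\min}\big(L_{(\bm\lambda,\nu)}(\bm A,B)\big)$, and the Clifford radial $\epsilon$-pseudospectrum is $\dot\Lambda^{C}_\epsilon(\bm A,B)=\{(\bm\lambda,\nu)\in\mathbb{R}^d\times\mathbb{C}:\dot\mu^{C}_{(\bm\lambda,\nu)}(\bm A,B)\le\epsilon\}$. Define $$F_{(\bm\lambda,\nu)}(\bm A,B)=\sum_{i=1}^d\big(G_i+G_i^\dagger\big)-\sum_{i=1}^d\big(H_i+H_i^\dagger\big),\quad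 G_i=(A_i-\lambda_i I)(B-\nu I)\otimes\Gamma_iP,\quad H_i=(A_i-\lambda_i I)(B-\nu I)^\dagger\otimes\Gamma_iQ.$$ All matrix norms are operator norms; vector norms are Euclidean. *)

theory Defs
  imports "HOL-Analysis.Analysis"
begin

text \<open>The 2m x 2m Clifford matrices are indexed by the sum type 'm::finite + 'm, whose
 first summand gives the upper-left block (P) and second the lower-right (Q).\<close>

definition adj :: "complex^'n^'m \<Rightarrow> complex^'m^'n" where
  "adj M = (\<chi> i j. cnj (M $ j $ i))"

definition kron :: "complex^'a^'a \<Rightarrow> complex^'b^'b \<Rightarrow> complex^('a \<times> 'b)^('a \<times> 'b)" where
  "kron M N = (\<chi> p q. M $ fst p $ fst q * N $ snd p $ snd q)"

definition Pblk :: "complex^('m::finite + 'm)^('m::finite + 'm)" where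
  "Pblk = (\<chi> i j. if i = j \<and> (\<exists>k. i = Inl k) then 1 else 0)"

definition Qblk :: "complex^('m::finite + 'm)^('m::finite + 'm)" where
  "Qblk = (\<chi> i j. if i = j \<and> (\<exists>k. i = Inr k) then 1 else 0)"

definition opnorm :: "complex^'n^'n \<Rightarrow> real" where
  "opnorm M = onorm (\<lambda>x. M *v x)"

definition sigma_min :: "complex^'n^'n \<Rightarrow> real" where
  "sigma_min M = Inf {norm (M *v x) | x. norm x = 1}"

definition is_clifford :: "nat \<Rightarrow> (nat \<Rightarrow> complex^('m::finite + 'm)^('m::finite + 'm)) \<Rightarrow> bool" where
  "is_clifford d \<Gamma> \<longleftrightarrow>
     (\<forall>i<d. adj (\<Gamma> i) = \<Gamma> i \<and> \<Gamma> i ** \<Gamma> i = mat 1) \<and>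
     (\<forall>i<d. \<forall>j<d. i \<noteq> j \<longrightarrow> \<Gamma> i ** \<Gamma> j = - (\<Gamma> j ** \<Gamma> i))"

text \<open>Non-Hermitian spectral localizer; lam :: nat => real represents the point of R^d
 (only the entries lam 0, ..., lam (d-1) are used).\<close>
definition localizer ::
  "nat \<Rightarrow> (nat \<Rightarrow> complex^('m::finite + 'm)^('m::finite + 'm)) \<Rightarrow> (nat \<Rightarrow> complex^'n^'n) \<Rightarrow> complex^'n^'n
   \<Rightarrow> (nat \<Rightarrow> real) \<Rightarrow> complex \<Rightarrow> complex^('n::finite \<times> ('m::finite + 'm))^('n::finite \<times> ('m::finite + 'm))" where
  "localizer d \<Gamma> A B lam \<nu> =
     (\<Sum>i<d. kron (A i - mat (complex_of_real (lam i))) (\<Gamma> i))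
     + kron (B - mat \<nu>) Pblk - kron (adj (B - mat \<nu>)) Qblk"

definition clifford_radial_gap where
  "clifford_radial_gap d \<Gamma> A B lam \<nu> = sigma_min (localizer d \<Gamma> A B lam \<nu>)"

definition clifford_radial_pseudospectrum ::
  "nat \<Rightarrow> (nat \<Rightarrow> complex^('m::finite + 'm)^('m::finite + 'm)) \<Rightarrow> (nat \<Rightarrow> complex^'n^'n) \<Rightarrow> complex^'n^'n
   \<Rightarrow> real \<Rightarrow> ((nat \<Rightarrow> real) \<times> complex) set" where
  "clifford_radial_pseudospectrum d \<Gamma> A B \<epsilon> =
     {(lam, \<nu>). clifford_radial_gap d \<Gamma> A B lam \<nu> \<le> \<epsilon>}"

definition Fmat ::
  "nat \<Rightarrow> (nat \<Rightarrow> complex^('m::finite + 'm)^('m::finite + 'm)) \<Rightarrow> (nat \<Rightarrow> complex^'n^'n) \<Rightarrow> complex^'n^'n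
   \<Rightarrow> (nat \<Rightarrow> real) \<Rightarrow> complex \<Rightarrow> complex^('n::finite \<times> ('m::finite + 'm))^('n::finite \<times> ('m::finite + 'm))" where
  "Fmat d \<Gamma> A B lam \<nu> =
     (let G = (\<lambda>i. kron ((A i - mat (complex_of_real (lam i))) ** (B - mat \<nu>)) (\<Gamma> i ** Pblk));
          H = (\<lambda>i. kron ((A i - mat (complex_of_real (lam i))) ** adj (B - mat \<nu>)) (\<Gamma> i ** Qblk))
      in (\<Sum>i<d. G i + adj (G i)) - (\<Sum>i<d. H i + adj (H i)))"

end

theory Submission
  imports Defs
begin


lemma inner_complex_cnj: "inner (x::complex) y = Re (cnj x * y)"
  by (simp add: inner_complex_def)

definition tens :: "complex^'a \<Rightarrow> complex^'b \<Rightarrow> complex^('a \<times> 'b)" where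
  "tens u v = (\<chi> p. u $ fst p * v $ snd p)"

lemma inner_adj:
  fixes M :: "complex^'n::finite^'n"
  shows "inner x (M *v y) = inner (adj M *v x) y"
proof -
  have "inner x (M *v y) = Re (\<Sum>i\<in>UNIV. \<Sum>j\<in>UNIV. cnj (x$i) * (M$i$j * y$j))"
    by (simp add: inner_vec_def matrix_vector_mult_def inner_complex_cnj Re_sum sum_distrib_left)
  also have "\<dots> = Re (\<Sum>j\<in>UNIV. \<Sum>i\<in>UNIV. cnj (x$i) * (M$i$j * y$j))"
    by (subst sum.swap) simp
  also have "\<dots> = Re (\<Sum>j\<in>UNIV. cnj (\<Sum>i\<in>UNIV. cnj (M$i$j) * x$i) * y$j)"
    by (rule arg_cong[where f=Re]) (simp add: sum_distrib_left sum_distrib_right mult_ac)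
  also have "\<dots> = inner (adj M *v x) y"
    unfolding inner_vec_def inner_complex_cnj Re_sum[symmetric]
    by (simp add: matrix_vector_mult_def adj_def)
  finally show ?thesis .
qed

lemma adj_adj[simp]: "adj (adj M) = M"
  by (simp add: adj_def vec_eq_iff)

lemma adj_diff: "adj (M - N) = adj M - adj N"
  by (simp add: adj_def vec_eq_iff)

lemma adj_add: "adj (M + N) = adj M + adj N"
  by (simp add: adj_def vec_eq_iff)

lemma adj_mat: "adj (mat c) = mat (cnj c)"
  by (simp add: adj_def vec_eq_iff mat_def)

lemma adj_mult: "adj ((M::complex^'n::finite^'n) ** N) = adj N ** adj M"
  by (simp add: adj_def vec_eq_iff matrix_matrix_mult_def mult.commute)

lemma adj_kron: "adj (kron M N) = kron (adj M) (adj N)"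
  by (simp add: adj_def vec_eq_iff kron_def)

lemma kron_tens:
  fixes M :: "complex^'a::finite^'a" and N :: "complex^'b::finite^'b"
  shows "kron M N *v tens u v = tens (M *v u) (N *v v)"
  by (simp add: vec_eq_iff kron_def tens_def matrix_vector_mult_def sum_product
      UNIV_Times_UNIV[symmetric] sum.cartesian_product case_prod_unfold mult_ac del: UNIV_Times_UNIV)

lemma kron_mult:
  fixes M M' :: "complex^'a::finite^'a" and N N' :: "complex^'b::finite^'b"
  shows "kron (M ** M') (N ** N') = kron M N ** kron M' N'"
  by (simp add: vec_eq_iff kron_def matrix_matrix_mult_def sum_product
      UNIV_Times_UNIV[symmetric] sum.cartesian_product case_prod_unfold mult_ac del: UNIV_Times_UNIV)

lemma kron_diff: "kron (M - M') N = kron M N - kron M' N"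
  by (simp add: vec_eq_iff kron_def algebra_simps)

lemma kron_uminus: "kron M (- N) = - kron M N"
  by (simp add: vec_eq_iff kron_def)

lemma norm_sq_vec: "(norm (x::complex^'a::finite))^2 = (\<Sum>i\<in>UNIV. (cmod (x$i))^2)"
  by (simp add: power2_norm_eq_inner inner_vec_def)

lemma norm_tens:
  fixes u :: "complex^'a::finite" and v :: "complex^'b::finite"
  shows "norm (tens u v) = norm u * norm v"
proof -
  have "(norm (tens u v))^2 = (norm u * norm v)^2"
    by (simp add: norm_sq_vec tens_def power_mult_distrib norm_mult sum_product
      UNIV_Times_UNIV[symmetric] sum.cartesian_product case_prod_unfold del: UNIV_Times_UNIV)
  then show ?thesis by (simp add: power2_eq_iff_nonneg)
qed

lemma mv_bounded: "bounded_linear (\<lambda>x. (M::complex^'n::finite^'n) *v x)"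
  using linear_conv_bounded_linear matrix_vector_mul_linear by blast

lemma opnorm_le: "norm ((M::complex^'n::finite^'n) *v x) \<le> opnorm M * norm x"
  unfolding opnorm_def by (rule onorm[OF mv_bounded])

lemma opnorm_nonneg: "opnorm (M::complex^'n::finite^'n) \<ge> 0"
  unfolding opnorm_def by (rule onorm_pos_le[OF mv_bounded])



lemma sum_mv: "(sum f S) *v (x::'a::comm_ring_1^'n::finite) = sum (\<lambda>i. f i *v x) S"
  by (induct S rule: infinite_finite_induct) (auto simp: matrix_vector_mult_add_rdistrib)

lemma mat_mv: "(mat c :: complex^'n::finite^'n) *v x = c *s x"
  by (simp add: vec_eq_iff matrix_vector_mult_def mat_def if_distrib if_distribR cong: if_cong)

lemma mult_shift_entry:
  fixes A B :: "complex^'n::finite^'n"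
  shows "((A - mat a) ** (B - mat b)) $ i $ j = (A ** B)$i$j - b * A$i$j - a * B$i$j + (if i = j then a*b else 0)"
proof -
  have "((A - mat a) ** (B - mat b)) $ i $ j = (\<Sum>k\<in>UNIV. A$i$k * B$k$j - (if k = j then b * A$i$k else 0)
       - (if i = k then a * B$k$j else 0) + (if i = k then (if k = j then a * b else 0) else 0))"
    unfolding matrix_matrix_mult_def mat_def by (simp, intro sum.cong refl) (auto simp: algebra_simps)
  also have "\<dots> = (A ** B)$i$j - b * A$i$j - a * B$i$j + (if i = j then a*b else 0)"
    by (simp add: sum.distrib sum_subtractf matrix_matrix_mult_def)
  finally show ?thesis .
qed

lemma comm_shift:
  fixes A B :: "complex^'n::finite^'n"
  shows "(A - mat a) ** (B - mat b) - (B - mat b) ** (A - mat a) = A ** B - B ** A"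
  by (simp add: vec_eq_iff mult_shift_entry algebra_simps)

lemma inner_PQ:
  fixes M N :: "complex^'n::finite^'n"
  shows "inner (kron M Pblk *v x) (kron N Qblk *v y) = 0"
proof -
  have 1: "(kron M Pblk *v x) $ (a, Inr k) = 0" for a k
    by (simp add: matrix_vector_mult_def kron_def Pblk_def)
  have 2: "(kron N Qblk *v y) $ (a, Inl k) = 0" for a k
    by (simp add: matrix_vector_mult_def kron_def Qblk_def)
  have "inner ((kron M Pblk *v x) $ p) ((kron N Qblk *v y) $ p) = 0" for p
  proof (cases p)
    case (Pair a s) then show ?thesis by (cases s) (simp_all add: 1 2)
  qed
  then show ?thesis by (simp add: inner_vec_def)
qed

lemma inner_adj2:
  fixes M :: "complex^'n::finite^'n"
  shows "inner x (adj M *v y) = inner (M *v x) y"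
  using inner_adj[of x "adj M" y] by simp

lemma norm_unitary:
  fixes G :: "complex^'n::finite^'n"
  assumes "adj G = G" "G ** G = mat 1"
  shows "norm (G *v v) = norm v"
proof -
  have "inner (G *v v) (G *v v) = inner v v"
    using inner_adj[of "G *v v" G v] assms by (simp add: matrix_vector_mul_assoc)
  then show ?thesis by (simp add: norm_eq_sqrt_inner)
qed

lemma sum_diag_split:
  assumes "i < (d::nat)"
  shows "(\<Sum>k<d. f k) = f i + (\<Sum>k<d. if i \<noteq> k then f k else (0::real))"
proof -
  have "(\<Sum>k<d. f k) = (\<Sum>k<d. (if i = k then f k else 0) + (if i \<noteq> k then f k else 0))"
    by (rule sum.cong) auto
  also have "\<dots> = f i + (\<Sum>k<d. if i \<noteq> k then f k else (0::real))"
  proof -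
    have "(\<Sum>k<d. if i = k then f k else 0) = (f i::real)" using assms by (subst sum.delta') auto
    then show ?thesis by (simp only: sum.distrib)
  qed
  finally show ?thesis .
qed



theorem mainTheorem3:
  fixes d :: nat
    and \<Gamma> :: "nat \<Rightarrow> complex^('m::finite + 'm)^('m::finite + 'm)"
    and A :: "nat \<Rightarrow> complex^'n::finite^'n"
    and B :: "complex^'n::finite^'n"
    and lam :: "nat \<Rightarrow> real" and \<nu> :: complex
    and \<psi> :: "complex^'n"
    and \<epsilon>1 \<epsilon>2 :: real
  assumes "d \<ge> 1"
    and "is_clifford d \<Gamma>"
    and "\<forall>i<d. adj (A i) = A i"
    and "norm \<psi> = 1"
    and "2 * (\<Sum>i<d. (norm (A i *v \<psi> - complex_of_real (lam i) *s \<psi>))\<^sup>2)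
         + (norm (B *v \<psi> - \<nu> *s \<psi>))\<^sup>2 + (norm (adj B *v \<psi> - cnj \<nu> *s \<psi>))\<^sup>2 \<le> \<epsilon>1"
    and "(\<Sum>i<d. \<Sum>k<d. if i \<noteq> k then opnorm (A i ** A k - A k ** A i) else 0)
         + opnorm (Fmat d \<Gamma> A B lam \<nu>) \<le> \<epsilon>2"
    and "\<epsilon>1 \<ge> 0" and "\<epsilon>2 \<ge> 0"
  shows "(lam, \<nu>) \<in> clifford_radial_pseudospectrum d \<Gamma> A B (sqrt (\<epsilon>1 / sqrt 2 + \<epsilon>2))"
proof -
  note cl = assms(2)[unfolded is_clifford_def]
  define X where "X i = A i - mat (complex_of_real (lam i))" for i
  define Y where "Y = B - mat \<nu>"
  define K where "K i = kron (X i) (\<Gamma> i)" for i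
  define W :: "complex^('n \<times> ('m+'m))^('n \<times> ('m+'m))" where "W = kron Y Pblk"
  define V :: "complex^('n \<times> ('m+'m))^('n \<times> ('m+'m))" where "V = kron (adj Y) Qblk"
  define L where "L = localizer d \<Gamma> A B lam \<nu>"
  define F where "F = Fmat d \<Gamma> A B lam \<nu>"
  define e :: "complex^('m+'m)" where
    "e = (\<chi> j. if j = Inl undefined \<or> j = Inr undefined then complex_of_real (1 / sqrt 2) else 0)"
  define \<phi> where "\<phi> = tens \<psi> e"
  have L_eq: "L = (\<Sum>i<d. K i) + W - V"
    by (simp add: L_def localizer_def K_def W_def V_def X_def Y_def)
  have F_eq: "F = (\<Sum>i<d. K i ** W + adj (K i ** W)) - (\<Sum>i<d. K i ** V + adj (K i ** V))"
    by (simp add: F_def Fmat_def Let_def K_def W_def V_def X_def Y_def kron_mult)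
  have Xadj: "adj (X i) = X i" if "i < d" for i
    using assms(3) that by (simp add: X_def adj_diff adj_mat)
  have Kadj: "adj (K i) = K i" if "i < d" for i
    using cl Xadj[OF that] that by (simp add: K_def adj_kron)
  have Pent: "(Pblk *v x) $ j = (if (\<exists>l. j = Inl l) then x $ j else 0)" for x :: "complex^('m+'m)" and j
  proof -
    have "(Pblk *v x) $ j = (\<Sum>k\<in>UNIV. if j = k then (if (\<exists>l. j = Inl l) then x $ k else 0) else 0)"
      unfolding matrix_vector_mult_def Pblk_def vec_lambda_beta by (intro sum.cong refl) auto
    then show ?thesis by simp
  qed
  have Qent: "(Qblk *v x) $ j = (if (\<exists>l. j = Inr l) then x $ j else 0)" for x :: "complex^('m+'m)" and j
  proof -
    have "(Qblk *v x) $ j = (\<Sum>k\<in>UNIV. if j = k then (if (\<exists>l. j = Inr l) then x $ k else 0) else 0)"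
      unfolding matrix_vector_mult_def Qblk_def vec_lambda_beta by (intro sum.cong refl) auto
    then show ?thesis by simp
  qed
  have Pe: "Pblk *v e = (\<chi> j. if j = Inl undefined then complex_of_real (1 / sqrt 2) else 0)"
    unfolding vec_eq_iff Pent by (intro allI, case_tac i) (auto simp: e_def)
  have Qe: "Qblk *v e = (\<chi> j. if j = Inr undefined then complex_of_real (1 / sqrt 2) else 0)"
    unfolding vec_eq_iff Qent by (intro allI, case_tac i) (auto simp: e_def)
  have nPe: "(norm (Pblk *v e))^2 = 1/2"
  proof -
    have "(norm (Pblk *v e))^2 = (\<Sum>i\<in>UNIV. if i = (Inl undefined :: 'm+'m) then 1/2 else (0::real))"
      unfolding norm_sq_vec Pe vec_lambda_beta by (rule sum.cong[OF refl]) (simp add: norm_divide power_divide)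
    then show ?thesis by simp
  qed
  have nQe: "(norm (Qblk *v e))^2 = 1/2"
  proof -
    have "(norm (Qblk *v e))^2 = (\<Sum>i\<in>UNIV. if i = (Inr undefined :: 'm+'m) then 1/2 else (0::real))"
      unfolding norm_sq_vec Qe vec_lambda_beta by (rule sum.cong[OF refl]) (simp add: norm_divide power_divide)
    then show ?thesis by simp
  qed
  have ne: "norm e = 1"
  proof -
    have "(norm e)^2 = (\<Sum>j\<in>UNIV. (if j = (Inl undefined :: 'm+'m) then 1/2 else 0) + (if j = (Inr undefined :: 'm+'m) then 1/2 else (0::real)))"
      unfolding norm_sq_vec e_def vec_lambda_beta by (rule sum.cong[OF refl]) (auto simp add: norm_divide power_divide)
    also have "\<dots> = 1" by (simp add: sum.distrib)
    finally show ?thesis using norm_ge_zero[of e] by (auto simp add: power2_eq_1_iff)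
  qed
  have nphi: "norm \<phi> = 1" using assms(4) ne by (simp add: \<phi>_def norm_tens)
  have Kphi: "K i *v \<phi> = tens (X i *v \<psi>) (\<Gamma> i *v e)" for i
    by (simp add: K_def \<phi>_def kron_tens)
  have nK: "norm (K i *v \<phi>) = norm (X i *v \<psi>)" if "i < d" for i
    using cl that ne by (simp add: Kphi norm_tens norm_unitary)
  have nW: "(norm (W *v \<phi>))^2 = (norm (Y *v \<psi>))^2 / 2"
    by (simp add: W_def \<phi>_def kron_tens norm_tens power_mult_distrib nPe)
  have nV: "(norm (V *v \<phi>))^2 = (norm (adj Y *v \<psi>))^2 / 2"
    by (simp add: V_def \<phi>_def kron_tens norm_tens power_mult_distrib nQe)
  have WV: "inner (W *v \<phi>) (V *v \<phi>) = 0"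
    by (simp add: W_def V_def inner_PQ)
  define S where "S = (\<Sum>i<d. K i *v \<phi>)"
  have Lphi: "L *v \<phi> = S + W *v \<phi> - V *v \<phi>"
    by (simp add: L_eq S_def sum_mv matrix_vector_mult_add_rdistrib matrix_vector_mult_diff_rdistrib)
  have expand: "(norm (L *v \<phi>))^2 = inner S S + (norm (W *v \<phi>))^2 + (norm (V *v \<phi>))^2
      + 2 * inner S (W *v \<phi>) - 2 * inner S (V *v \<phi>) - 2 * inner (W *v \<phi>) (V *v \<phi>)"
    unfolding Lphi power2_norm_eq_inner
    by (simp add: inner_add_left inner_add_right inner_diff_left inner_diff_right inner_commute algebra_simps)
  have SS: "inner S S = (\<Sum>i<d. \<Sum>k<d. inner (K i *v \<phi>) (K k *v \<phi>))"
    by (simp add: S_def inner_sum_left inner_sum_right, subst sum.swap, simp)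
  have Kinner: "inner \<phi> ((K i ** M) *v \<phi>) = inner (K i *v \<phi>) (M *v \<phi>)" if "i < d" for i M
    using inner_adj[of \<phi> "K i" "M *v \<phi>"] Kadj[OF that] by (simp add: matrix_vector_mul_assoc)
  have herm: "inner \<phi> ((M + adj M) *v \<phi>) = 2 * inner \<phi> (M *v \<phi>)" for M :: "complex^('n \<times> ('m+'m))^('n \<times> ('m+'m))"
    by (simp add: matrix_vector_mult_add_rdistrib inner_add_right inner_adj2 inner_commute)
  have Fphi: "inner \<phi> (F *v \<phi>) = 2 * inner S (W *v \<phi>) - 2 * inner S (V *v \<phi>)"
  proof -
    have "inner \<phi> (F *v \<phi>) = (\<Sum>i<d. inner \<phi> ((K i ** W + adj (K i ** W)) *v \<phi>))
       - (\<Sum>i<d. inner \<phi> ((K i ** V + adj (K i ** V)) *v \<phi>))"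
      unfolding F_eq matrix_vector_mult_diff_rdistrib sum_mv inner_diff_right inner_sum_right ..
    also have "\<dots> = (\<Sum>i<d. 2 * inner (K i *v \<phi>) (W *v \<phi>)) - (\<Sum>i<d. 2 * inner (K i *v \<phi>) (V *v \<phi>))"
      unfolding herm by (intro arg_cong2[where f=minus] sum.cong refl) (simp_all add: Kinner)
    also have "\<dots> = 2 * inner S (W *v \<phi>) - 2 * inner S (V *v \<phi>)"
      unfolding S_def inner_sum_left sum_distrib_left ..
    finally show ?thesis .
  qed
  have cross: "inner (K i *v \<phi>) (K k *v \<phi>) \<le> opnorm (A i ** A k - A k ** A i)"
    if "i < d" "k < d" "i \<noteq> k" for i k
  proof -
    define C where "C = A i ** A k - A k ** A i"
    have anti: "\<Gamma> k ** \<Gamma> i = - (\<Gamma> i ** \<Gamma> k)" using cl that by blast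
    have "K i ** K k + K k ** K i = kron (X i ** X k) (\<Gamma> i ** \<Gamma> k) - kron (X k ** X i) (\<Gamma> i ** \<Gamma> k)"
      by (simp add: K_def kron_mult[symmetric] anti kron_uminus)
    also have "\<dots> = kron (X i ** X k - X k ** X i) (\<Gamma> i ** \<Gamma> k)" by (simp add: kron_diff)
    also have "X i ** X k - X k ** X i = C" by (simp add: X_def C_def comm_shift)
    finally have KK: "K i ** K k + K k ** K i = kron C (\<Gamma> i ** \<Gamma> k)" .
    have "2 * inner (K i *v \<phi>) (K k *v \<phi>) = inner \<phi> ((K i ** K k + K k ** K i) *v \<phi>)"
      using Kinner[OF that(1), of "K k"] Kinner[OF that(2), of "K i"]
      by (simp add: matrix_vector_mult_add_rdistrib inner_add_right inner_commute)
    also have "\<dots> \<le> norm \<phi> * norm ((kron C (\<Gamma> i ** \<Gamma> k)) *v \<phi>)"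
      unfolding KK by (rule norm_cauchy_schwarz)
    also have "\<dots> = norm (C *v \<psi>)"
    proof -
      have gi: "adj (\<Gamma> i) = \<Gamma> i" "\<Gamma> i ** \<Gamma> i = mat 1" using cl that(1) by blast+
      have gk: "adj (\<Gamma> k) = \<Gamma> k" "\<Gamma> k ** \<Gamma> k = mat 1" using cl that(2) by blast+
      have "(kron C (\<Gamma> i ** \<Gamma> k)) *v \<phi> = tens (C *v \<psi>) (\<Gamma> i *v (\<Gamma> k *v e))"
        unfolding \<phi>_def kron_tens matrix_vector_mul_assoc ..
      then have "norm ((kron C (\<Gamma> i ** \<Gamma> k)) *v \<phi>) = norm (C *v \<psi>)"
        by (simp only: norm_tens norm_unitary[OF gi] norm_unitary[OF gk] ne mult_1_right)
      then show ?thesis using nphi by simp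
    qed
    also have "\<dots> \<le> opnorm C" using opnorm_le[of C \<psi>] assms(4) by simp
    finally show ?thesis using opnorm_nonneg[of C] C_def by simp
  qed
  have Xpsi: "X i *v \<psi> = A i *v \<psi> - complex_of_real (lam i) *s \<psi>" for i
    by (simp add: X_def matrix_vector_mult_diff_rdistrib mat_mv)
  have Ypsi: "Y *v \<psi> = B *v \<psi> - \<nu> *s \<psi>"
    by (simp add: Y_def matrix_vector_mult_diff_rdistrib mat_mv)
  have Y'psi: "adj Y *v \<psi> = adj B *v \<psi> - cnj \<nu> *s \<psi>"
    by (simp add: Y_def adj_diff adj_mat matrix_vector_mult_diff_rdistrib mat_mv)
  define T where "T = (\<Sum>i<d. (norm (A i *v \<psi> - complex_of_real (lam i) *s \<psi>))\<^sup>2)"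
  define Oc where "Oc = (\<Sum>i<d. \<Sum>k<d. if i \<noteq> k then opnorm (A i ** A k - A k ** A i) else 0)"
  have SSle: "inner S S \<le> T + Oc"
  proof -
    have "inner S S = (\<Sum>i<d. inner (K i *v \<phi>) (K i *v \<phi>)
        + (\<Sum>k<d. if i \<noteq> k then inner (K i *v \<phi>) (K k *v \<phi>) else 0))"
      unfolding SS by (rule sum.cong[OF refl]) (rule sum_diag_split, simp)
    also have "\<dots> \<le> (\<Sum>i<d. (norm (A i *v \<psi> - complex_of_real (lam i) *s \<psi>))\<^sup>2
        + (\<Sum>k<d. if i \<noteq> k then opnorm (A i ** A k - A k ** A i) else 0))"
    proof (rule sum_mono)
      fix i assume i: "i \<in> {..<d}"
      have "inner (K i *v \<phi>) (K i *v \<phi>) = (norm (A i *v \<psi> - complex_of_real (lam i) *s \<psi>))\<^sup>2"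
        using nK[of i] i by (simp add: power2_norm_eq_inner[symmetric] Xpsi)
      moreover have "(\<Sum>k<d. if i \<noteq> k then inner (K i *v \<phi>) (K k *v \<phi>) else 0)
          \<le> (\<Sum>k<d. if i \<noteq> k then opnorm (A i ** A k - A k ** A i) else 0)"
        using i by (intro sum_mono) (auto intro: cross)
      ultimately show "inner (K i *v \<phi>) (K i *v \<phi>) + (\<Sum>k<d. if i \<noteq> k then inner (K i *v \<phi>) (K k *v \<phi>) else 0)
          \<le> (norm (A i *v \<psi> - complex_of_real (lam i) *s \<psi>))\<^sup>2
            + (\<Sum>k<d. if i \<noteq> k then opnorm (A i ** A k - A k ** A i) else 0)" by simp
    qed
    also have "\<dots> = T + Oc" by (simp add: T_def Oc_def sum.distrib)
    finally show ?thesis .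
  qed
  have Fle: "inner \<phi> (F *v \<phi>) \<le> opnorm F"
  proof -
    have "inner \<phi> (F *v \<phi>) \<le> norm \<phi> * norm (F *v \<phi>)" by (rule norm_cauchy_schwarz)
    also have "\<dots> \<le> opnorm F" using opnorm_le[of F \<phi>] nphi by simp
    finally show ?thesis .
  qed
  have main: "(norm (L *v \<phi>))^2 \<le> \<epsilon>1 / 2 + \<epsilon>2"
  proof -
    have "(norm (L *v \<phi>))^2 = inner S S + (norm (Y *v \<psi>))^2 / 2 + (norm (adj Y *v \<psi>))^2 / 2
        + inner \<phi> (F *v \<phi>)"
      using expand nW nV WV Fphi by simp
    also have "\<dots> \<le> T + Oc + (norm (Y *v \<psi>))^2 / 2 + (norm (adj Y *v \<psi>))^2 / 2 + opnorm F"
      using SSle Fle by simp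
    also have "\<dots> \<le> \<epsilon>1 / 2 + \<epsilon>2"
      using assms(5) assms(6) unfolding T_def[symmetric] Oc_def[symmetric] F_def[symmetric] Ypsi Y'psi
      by simp
    finally show ?thesis .
  qed
  have s2: "\<epsilon>1 / 2 \<le> \<epsilon>1 / sqrt 2"
  proof -
    have "sqrt 2 \<le> (2::real)" by (simp add: real_sqrt_le_iff[of 2 4, simplified])
    then show ?thesis using assms(7) by (intro divide_left_mono) auto
  qed
  have le1: "norm (L *v \<phi>) \<le> sqrt (\<epsilon>1 / sqrt 2 + \<epsilon>2)"
    using main s2 by (intro real_le_rsqrt) linarith
  have "sigma_min L \<le> norm (L *v \<phi>)"
    unfolding sigma_min_def
    by (rule cInf_lower) (use nphi in \<open>auto intro!: bdd_belowI[of _ 0]\<close>)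
  then show ?thesis
    using le1 by (simp add: clifford_radial_pseudospectrum_def clifford_radial_gap_def L_def[symmetric])
qed

end
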